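(* Let $n,k$ be integers with $2\le k\le n$, and let $M\in\mathcal{S}^{n,k}$ have smallest eigenvalue $-\lambda_1<0$. Then $$\mathrm{dist}_F(M,\mathcal{S}^n_+)\le\sqrt{n-k}\cdot\lambda_1.$$
   Context: $\mathcal{S}^n_+$ denotes the cone of $n\times n$ real symmetric positive semidefinite (PSD) matrices. For integers $2\le k\le n$, the $k$-PSD closure $\mathcal{S}^{n,k}$ is the set of all $n\times n$ real symmetric matrices all of whose $k\times k$ principal submatrices are PSD. $\mathrm{dist}_F(M,\mathcal{S}^n_+)=\inf_{N\in\mathcal{S}^n_+}\|M-N\|_F$ with $\|\cdot\|_F$ the Frobenius norm. *)

theory Defs
  imports "HOL-Analysis.Analysis"
begin

text \<open>n x n real matrices are modelled as real^'n^'n with n = CARD('n).\<close>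

definition symmetric_mat :: "real^'n^'n \<Rightarrow> bool" where
  "symmetric_mat M \<longleftrightarrow> transpose M = M"

definition psd_cone :: "(real^'n^'n) set" where
  "psd_cone = {M. symmetric_mat M \<and> (\<forall>x::real^'n. 0 \<le> x \<bullet> (M *v x))}"

definition principal_submatrix_psd :: "real^'n^'n \<Rightarrow> 'n set \<Rightarrow> bool" where
  "principal_submatrix_psd M S \<longleftrightarrow>
     (\<forall>x::'n \<Rightarrow> real. 0 \<le> (\<Sum>i\<in>S. \<Sum>j\<in>S. x i * M$i$j * x j))"

definition k_psd_closure :: "nat \<Rightarrow> (real^'n^'n) set" where
  "k_psd_closure k = {M. symmetric_mat M \<and>
     (\<forall>S. card S = k \<longrightarrow> principal_submatrix_psd M S)}"

definition is_eigenvalue :: "real^'n^'n \<Rightarrow> real \<Rightarrow> bool" where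
  "is_eigenvalue M \<mu> \<longleftrightarrow> (\<exists>v. v \<noteq> 0 \<and> M *v v = \<mu> *\<^sub>R v)"

definition smallest_eigenvalue :: "real^'n^'n \<Rightarrow> real \<Rightarrow> bool" where
  "smallest_eigenvalue M \<mu> \<longleftrightarrow> is_eigenvalue M \<mu> \<and> (\<forall>\<nu>. is_eigenvalue M \<nu> \<longrightarrow> \<mu> \<le> \<nu>)"

definition frobenius_norm :: "real^'n^'n \<Rightarrow> real" where
  "frobenius_norm M = sqrt (\<Sum>i\<in>UNIV. \<Sum>j\<in>UNIV. (M$i$j)^2)"

definition distF_psd :: "real^'n^'n \<Rightarrow> real" where
  "distF_psd M = (INF N\<in>psd_cone. frobenius_norm (M - N))"

end

theory Submission
  imports Defs
begin

lemma matrix_vector_mult_minus_left: "(- A) *v (x::real^'n) = - (A *v x)"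
  by (simp add: matrix_vector_mult_def vec_eq_iff sum_negf)

lemma sym_dot:
  assumes "symmetric_mat A"
  shows "x \<bullet> (A *v y) = (A *v x) \<bullet> (y::real^'n)"
proof -
  have "x \<bullet> (A *v y) = (x v* A) \<bullet> y" by (simp add: dot_lmul_matrix)
  also have "x v* A = A *v x" using assms unfolding symmetric_mat_def
    by (metis vector_transpose_matrix)
  finally show ?thesis .
qed

lemma qf_sum: "x \<bullet> (A *v x) = (\<Sum>i\<in>UNIV. \<Sum>j\<in>UNIV. x$i * A$i$j * (x::real^'n)$j)"
  by (simp add: inner_vec_def matrix_vector_mult_def sum_distrib_left mult.assoc)

lemma qf_cont: "continuous_on S (\<lambda>x::real^'n. x \<bullet> (A *v x))"
  unfolding qf_sum by (intro continuous_intros)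

lemma quad_nonneg_imp:
  fixes a c :: real
  assumes "c \<ge> 0" "\<And>t. 0 \<le> 2*t*a + t^2*c"
  shows "a = 0"
proof (rule ccontr)
  assume "a \<noteq> 0"
  define t where "t = -a/(c+1)"
  have d: "c + 1 > 0" using assms(1) by simp
  have tc: "t * (c+1) = -a" using d by (simp add: t_def)
  have "(c+1) * (2*t*a + t^2*c) = 2*a*(t*(c+1)) + t*c*(t*(c+1))"
    by (simp add: algebra_simps power2_eq_square)
  also have "\<dots> = -2*a^2 - t*c*a" using tc by (simp add: power2_eq_square)
  also have "t*c*a = -(a^2*c/(c+1))" by (simp add: t_def power2_eq_square)
  finally have e: "(c+1) * (2*t*a + t^2*c) = -2*a^2 + a^2*c/(c+1)" by simp
  have "a^2*c/(c+1) \<le> a^2" using d assms(1) by (simp add: divide_le_eq algebra_simps)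
  moreover have "a^2 > 0" using \<open>a \<noteq> 0\<close> by simp
  ultimately have "(c+1) * (2*t*a + t^2*c) < 0" using e by linarith
  moreover have "(c+1) * (2*t*a + t^2*c) \<ge> 0" using d assms(2)[of t] by simp
  ultimately show False by simp
qed

lemma rayleigh_min:
  fixes A :: "real^'n^'n" and V :: "(real^'n) set"
  assumes sym: "symmetric_mat A" and sub: "subspace V" and ne: "V \<noteq> {0}"
    and inv: "\<And>x. x \<in> V \<Longrightarrow> A *v x \<in> V"
  shows "\<exists>v\<in>V. norm v = 1 \<and> A *v v = (v \<bullet> (A *v v)) *\<^sub>R v \<and>
           (\<forall>x\<in>V. (v \<bullet> (A *v v)) * (norm x)^2 \<le> x \<bullet> (A *v x))"
proof -
  define f where "f = (\<lambda>x::real^'n. x \<bullet> (A *v x))"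
  define S where "S = V \<inter> sphere 0 1"
  have "compact S" unfolding S_def
    by (intro closed_Int_compact closed_subspace sub compact_sphere)
  obtain x0 where x0: "x0 \<in> V" "x0 \<noteq> 0" using ne sub subspace_0 by blast
  have "x0 /\<^sub>R norm x0 \<in> S" using x0 sub unfolding S_def
    by (simp add: subspace_scale)
  then have "S \<noteq> {}" by blast
  moreover have "continuous_on S f" unfolding f_def by (rule qf_cont)
  ultimately obtain v where v: "v \<in> S" "\<And>y. y \<in> S \<Longrightarrow> f v \<le> f y"
    using continuous_attains_inf[OF \<open>compact S\<close>] by metis
  define \<mu> where "\<mu> = f v"
  have vV: "v \<in> V" and nv: "norm v = 1" using v(1) by (auto simp: S_def)
  have fscale: "f (c *\<^sub>R x) = c^2 * f x" for c x
    by (simp add: f_def matrix_vector_mult_scaleR power2_eq_square)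
  have bound: "\<mu> * (norm x)^2 \<le> f x" if "x \<in> V" for x
  proof (cases "x = 0")
    case True then show ?thesis by (simp add: f_def)
  next
    case False
    have "x /\<^sub>R norm x \<in> S" using that False sub unfolding S_def
      by (simp add: subspace_scale)
    then have "\<mu> \<le> f (x /\<^sub>R norm x)" using v(2) by (simp add: \<mu>_def)
    also have "\<dots> = f x / (norm x)^2" by (simp add: fscale power_divide power_inverse field_simps)
    finally show ?thesis using False by (simp add: field_simps)
  qed
  have orth: "w \<bullet> (A *v v - \<mu> *\<^sub>R v) = 0" if wV: "w \<in> V" for w
  proof -
    define a where "a = w \<bullet> (A *v v) - \<mu> * (v \<bullet> w)"
    define c where "c = f w - \<mu> * (norm w)^2"
    have c0: "c \<ge> 0" using bound[OF wV] by (simp add: c_def)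
    have "0 \<le> 2*t*a + t^2*c" for t
    proof -
      have "v + t *\<^sub>R w \<in> V" using vV wV sub by (simp add: subspace_add subspace_scale)
      then have "\<mu> * (norm (v + t *\<^sub>R w))^2 \<le> f (v + t *\<^sub>R w)" by (rule bound)
      moreover have "f (v + t *\<^sub>R w) = \<mu> + 2*t*(w \<bullet> (A *v v)) + t^2 * f w"
      proof -
        have "v \<bullet> (A *v w) = w \<bullet> (A *v v)" using sym_dot[OF sym, of v w]
          by (simp add: inner_commute)
        then show ?thesis
          by (simp add: f_def \<mu>_def matrix_vector_right_distrib matrix_vector_mult_scaleR
              inner_add_left inner_add_right power2_eq_square algebra_simps)
      qed
      moreover have "(norm (v + t *\<^sub>R w))^2 = 1 + 2*t*(v \<bullet> w) + t^2 * (norm w)^2"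
      proof -
        have vv: "v \<bullet> v = 1" using nv by (metis norm_eq_1)
        have ww: "w \<bullet> w = (norm w)^2" by (simp add: power2_norm_eq_inner)
        have "(norm (v + t *\<^sub>R w))^2 = (v + t *\<^sub>R w) \<bullet> (v + t *\<^sub>R w)"
          by (simp add: power2_norm_eq_inner)
        also have "\<dots> = v \<bullet> v + 2*t*(v \<bullet> w) + t^2 * (w \<bullet> w)"
          by (simp add: inner_add_left inner_add_right inner_commute power2_eq_square algebra_simps)
        finally show ?thesis using vv ww by simp
      qed
      ultimately show ?thesis by (simp add: a_def c_def algebra_simps)
    qed
    then have "a = 0" using quad_nonneg_imp[OF c0] by blast
    then show ?thesis by (simp add: a_def inner_diff_right inner_commute)
  qed
  have "A *v v - \<mu> *\<^sub>R v \<in> V" using inv[OF vV] vV sub by (simp add: subspace_diff subspace_scale)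
  from orth[OF this] have "A *v v = \<mu> *\<^sub>R v" by simp
  then show ?thesis using vV nv bound by (auto simp: \<mu>_def f_def)
qed

definition good_sub :: "real^'n^'n \<Rightarrow> (real^'n) set \<Rightarrow> bool" where
  "good_sub M W \<longleftrightarrow> subspace W \<and> (\<forall>x\<in>W. M *v x \<in> W) \<and>
     (\<forall>u. (\<forall>w\<in>W. u \<bullet> w = 0) \<longrightarrow> 0 \<le> u \<bullet> (M *v u))"

lemma neg_subspace:
  fixes M :: "real^'n^'n"
  assumes sym: "symmetric_mat M"
  shows "\<exists>W. good_sub M W \<and> (\<forall>x\<in>W. x \<noteq> 0 \<longrightarrow> x \<bullet> (M *v x) < 0)"
proof -
  define P where "P d \<longleftrightarrow> (\<exists>W. good_sub M W \<and> dim W = d)" for d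
  have "good_sub M UNIV" unfolding good_sub_def
    by (auto simp: subspace_UNIV)
  then have "P (dim (UNIV::(real^'n) set))" unfolding P_def by blast
  then have "P (LEAST d. P d)" by (rule LeastI)
  then obtain W where gW: "good_sub M W" and dW: "dim W = (LEAST d. P d)" unfolding P_def by blast
  have minW: "\<not> good_sub M W'" if "dim W' < dim W" for W'
    using not_less_Least[of "dim W'" P] that dW unfolding P_def by auto
  have subW: "subspace W" and invW: "\<And>x. x \<in> W \<Longrightarrow> M *v x \<in> W"
    and perpW: "\<And>u. (\<forall>w\<in>W. u \<bullet> w = 0) \<Longrightarrow> 0 \<le> u \<bullet> (M *v u)"
    using gW unfolding good_sub_def by auto
  have "x \<bullet> (M *v x) < 0" if xW: "x \<in> W" and x0: "x \<noteq> 0" for x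
  proof (rule ccontr)
    assume "\<not> x \<bullet> (M *v x) < 0"
    then have qx: "x \<bullet> (M *v x) \<ge> 0" by simp
    have symN: "symmetric_mat (- M)" using sym unfolding symmetric_mat_def
      by (simp add: transpose_def vec_eq_iff)
    have "W \<noteq> {0}" using xW x0 by blast
    moreover have "(- M) *v y \<in> W" if "y \<in> W" for y
      using invW[OF that] subW by (simp add: matrix_vector_mult_minus_left subspace_neg)
    ultimately obtain v where vW: "v \<in> W" and nv: "norm v = 1"
      and ev': "(- M) *v v = (v \<bullet> ((- M) *v v)) *\<^sub>R v"
      and bd': "\<forall>y\<in>W. (v \<bullet> ((- M) *v v)) * (norm y)^2 \<le> y \<bullet> ((- M) *v y)"
      using rayleigh_min[OF symN subW] by blast
    define \<mu> where "\<mu> = v \<bullet> (M *v v)"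
    have ev: "M *v v = \<mu> *\<^sub>R v" using ev'
      by (simp add: \<mu>_def matrix_vector_mult_minus_left)
    have "- \<mu> * (norm x)^2 \<le> - (x \<bullet> (M *v x))"
      using bd' xW by (simp add: \<mu>_def matrix_vector_mult_minus_left)
    then have "\<mu> * (norm x)^2 \<ge> 0" using qx by simp
    then have mu0: "\<mu> \<ge> 0" using x0 by (simp add: zero_le_mult_iff)
    define W' where "W' = {y\<in>W. y \<bullet> v = 0}"
    have subW': "subspace W'" unfolding W'_def subspace_def using subW
      by (auto simp: subspace_add subspace_scale subspace_0 inner_add_left)
    have "W' \<subset> W" using vW nv unfolding W'_def by (auto simp: norm_eq_1) (metis (mono_tags, lifting) mem_Collect_eq zero_neq_one)
    then have "dim W' < dim W" using subW subW' by (metis dim_psubset span_eq_iff)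
    moreover have "good_sub M W'" unfolding good_sub_def
    proof (intro conjI ballI allI impI)
      show "subspace W'" by fact
    next
      fix y assume "y \<in> W'"
      then have "y \<in> W" "y \<bullet> v = 0" by (auto simp: W'_def)
      moreover have "(M *v y) \<bullet> v = y \<bullet> (M *v v)" using sym_dot[OF sym, of y v] by simp
      ultimately show "M *v y \<in> W'" using invW by (simp add: W'_def ev)
    next
      fix u assume uperp: "\<forall>w\<in>W'. u \<bullet> w = 0"
      define u' where "u' = u - (u \<bullet> v) *\<^sub>R v"
      have vv: "v \<bullet> v = 1" using nv by (metis norm_eq_1)
      have u'v: "u' \<bullet> v = 0" by (simp add: u'_def inner_diff_left vv)
      have "u' \<bullet> w = 0" if "w \<in> W" for w
      proof -
        define w'' where "w'' = w - (w \<bullet> v) *\<^sub>R v"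
        have "w'' \<in> W'" using that vW subW
          by (simp add: W'_def w''_def subspace_diff subspace_scale inner_diff_left vv)
        then have "u \<bullet> w'' = 0" using uperp by blast
        moreover have "v \<bullet> w'' = 0" by (simp add: w''_def inner_diff_right vv inner_commute)
        ultimately have "u' \<bullet> w'' = 0" by (simp add: u'_def inner_diff_left)
        moreover have "w = w'' + (w \<bullet> v) *\<^sub>R v" by (simp add: w''_def)
        ultimately show ?thesis using u'v by (metis inner_add_right inner_scaleR_right mult_zero_right add_0)
      qed
      then have q': "0 \<le> u' \<bullet> (M *v u')" by (rule perpW[rule_format])
      have uu: "u = u' + (u \<bullet> v) *\<^sub>R v" by (simp add: u'_def)
      have cross: "u' \<bullet> (M *v v) = 0" using u'v by (simp add: ev)
      have cross2: "v \<bullet> (M *v u') = 0" using sym_dot[OF sym, of v u'] cross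
        by (simp add: inner_commute)
      have "u \<bullet> (M *v u) = u' \<bullet> (M *v u') + (u \<bullet> v)^2 * \<mu>"
        apply (subst (1 2) uu)
        using cross cross2
        by (simp add: matrix_vector_right_distrib matrix_vector_mult_scaleR inner_add_left
            inner_add_right \<mu>_def power2_eq_square algebra_simps)
      then show "0 \<le> u \<bullet> (M *v u)" using q' mu0 by simp
    qed
    ultimately show False using minW by blast
  qed
  then show ?thesis using gW by blast
qed

lemma dot_sq_sum: "(b \<bullet> (x::real^'n))^2 = (\<Sum>i\<in>UNIV. \<Sum>j\<in>UNIV. b$i*x$i*(b$j*x$j))"
  by (simp add: inner_vec_def power2_eq_square sum_product)

lemma proj_qf:
  fixes B :: "(real^'n) set"
  shows "(\<Sum>i\<in>UNIV. \<Sum>j\<in>UNIV. x$i * (\<Sum>b\<in>B. b$i*b$j) * x$j) = (\<Sum>b\<in>B. (b \<bullet> x)^2)"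
proof -
  have "(\<Sum>i\<in>UNIV. \<Sum>j\<in>UNIV. x$i * (\<Sum>b\<in>B. b$i*b$j) * x$j)
      = (\<Sum>i\<in>UNIV. \<Sum>j\<in>UNIV. \<Sum>b\<in>B. b$i*x$i*(b$j*x$j))"
    by (simp add: sum_distrib_left sum_distrib_right algebra_simps)
  also have "\<dots> = (\<Sum>b\<in>B. \<Sum>i\<in>UNIV. \<Sum>j\<in>UNIV. b$i*x$i*(b$j*x$j))"
  proof -
    have "(\<Sum>i\<in>UNIV. \<Sum>j\<in>UNIV. \<Sum>b\<in>B. b$i*x$i*(b$j*x$j))
        = (\<Sum>i\<in>UNIV. \<Sum>b\<in>B. \<Sum>j\<in>UNIV. b$i*x$i*(b$j*x$j))"
      by (rule sum.cong[OF refl], rule sum.swap)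
    also have "\<dots> = (\<Sum>b\<in>B. \<Sum>i\<in>UNIV. \<Sum>j\<in>UNIV. b$i*x$i*(b$j*x$j))"
      by (rule sum.swap)
    finally show ?thesis .
  qed
  also have "\<dots> = (\<Sum>b\<in>B. (b \<bullet> x)^2)" by (simp add: dot_sq_sum)
  finally show ?thesis .
qed

lemma frob_B:
  fixes B :: "(real^'n) set"
  assumes fin: "finite B" and po: "pairwise orthogonal B" and nb: "\<And>b. b \<in> B \<Longrightarrow> norm b = 1"
  shows "(\<Sum>i\<in>UNIV. \<Sum>j\<in>UNIV. (\<Sum>b\<in>B. b$i*b$j)^2) = real (card B)"
proof -
  have "(\<Sum>i\<in>UNIV. \<Sum>j\<in>UNIV. (\<Sum>b\<in>B. b$i*b$j)^2)
      = (\<Sum>i\<in>UNIV. \<Sum>j\<in>UNIV. \<Sum>b\<in>B. \<Sum>c\<in>B. b$i*c$i*(b$j*c$j))"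
    by (simp add: power2_eq_square sum_product mult.assoc mult.left_commute)
  also have "\<dots> = (\<Sum>b\<in>B. \<Sum>c\<in>B. \<Sum>i\<in>UNIV. \<Sum>j\<in>UNIV. b$i*c$i*(b$j*c$j))"
  proof -
    have "(\<Sum>i\<in>UNIV. \<Sum>j\<in>UNIV. \<Sum>b\<in>B. \<Sum>c\<in>B. b$i*c$i*(b$j*c$j))
        = (\<Sum>i\<in>UNIV. \<Sum>b\<in>B. \<Sum>c\<in>B. \<Sum>j\<in>UNIV. b$i*c$i*(b$j*c$j))"
    proof (intro sum.cong refl)
      fix i
      have "(\<Sum>j\<in>UNIV. \<Sum>b\<in>B. \<Sum>c\<in>B. b$i*c$i*(b$j*c$j))
          = (\<Sum>b\<in>B. \<Sum>j\<in>UNIV. \<Sum>c\<in>B. b$i*c$i*(b$j*c$j))" by (rule sum.swap)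
      also have "\<dots> = (\<Sum>b\<in>B. \<Sum>c\<in>B. \<Sum>j\<in>UNIV. b$i*c$i*(b$j*c$j))"
        by (rule sum.cong[OF refl], rule sum.swap)
      finally show "(\<Sum>j\<in>UNIV. \<Sum>b\<in>B. \<Sum>c\<in>B. b$i*c$i*(b$j*c$j))
          = (\<Sum>b\<in>B. \<Sum>c\<in>B. \<Sum>j\<in>UNIV. b$i*c$i*(b$j*c$j))" .
    qed
    also have "\<dots> = (\<Sum>b\<in>B. \<Sum>c\<in>B. \<Sum>i\<in>UNIV. \<Sum>j\<in>UNIV. b$i*c$i*(b$j*c$j))"
      by (subst sum.swap, rule sum.cong[OF refl], rule sum.swap)
    finally show ?thesis .
  qed
  also have "\<dots> = (\<Sum>b\<in>B. \<Sum>c\<in>B. (b \<bullet> c)^2)" by (simp add: dot_sq_sum)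
  also have "\<dots> = (\<Sum>b\<in>B. \<Sum>c\<in>B. if c = b then 1 else 0)"
  proof (intro sum.cong refl)
    fix b c assume "b \<in> B" "c \<in> B"
    then show "(b \<bullet> c)^2 = (if c = b then 1 else 0)"
      using po nb by (auto simp: pairwise_def orthogonal_def norm_eq_1)
  qed
  also have "\<dots> = real (card B)" using fin by simp
  finally show ?thesis .
qed

theorem proposition3:
  fixes M :: "real^'n^'n" and k :: nat and lambda1 :: real
  assumes "2 \<le> k" and "k \<le> CARD('n)"
    and "M \<in> k_psd_closure k"
    and "smallest_eigenvalue M (- lambda1)" and "- lambda1 < 0"
  shows "distF_psd M \<le> sqrt (real (CARD('n) - k)) * lambda1"
proof -
  have sym: "symmetric_mat M" and kpsd: "\<And>S. card S = k \<Longrightarrow> principal_submatrix_psd M S"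
    using assms(3) unfolding k_psd_closure_def by auto
  have l0: "lambda1 > 0" using assms(5) by simp
  have lower: "- lambda1 * (norm x)^2 \<le> x \<bullet> (M *v x)" for x
  proof -
    obtain i :: 'n where True by blast
    have "axis i (1::real) \<noteq> 0" by (simp add: axis_eq_0_iff)
    then have "(UNIV :: (real^'n) set) \<noteq> {0}" by blast
    then obtain v where nv: "norm v = 1" and ev: "M *v v = (v \<bullet> (M *v v)) *\<^sub>R v"
      and bd: "\<forall>y. (v \<bullet> (M *v v)) * (norm y)^2 \<le> y \<bullet> (M *v y)"
      using rayleigh_min[OF sym subspace_UNIV] by auto
    have "is_eigenvalue M (v \<bullet> (M *v v))" unfolding is_eigenvalue_def
      using nv ev by (intro exI[of _ v]) auto
    then have "- lambda1 \<le> v \<bullet> (M *v v)" using assms(4) unfolding smallest_eigenvalue_def by blast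
    then have "- lambda1 * (norm x)^2 \<le> (v \<bullet> (M *v v)) * (norm x)^2"
      by (intro mult_right_mono) auto
    then show ?thesis using bd by (meson order_trans)
  qed
  obtain W where gW: "good_sub M W" and negW: "\<And>x. x \<in> W \<Longrightarrow> x \<noteq> 0 \<Longrightarrow> x \<bullet> (M *v x) < 0"
    using neg_subspace[OF sym] by blast
  have subW: "subspace W" and invW: "\<And>x. x \<in> W \<Longrightarrow> M *v x \<in> W"
    and perpW: "\<And>u. (\<forall>w\<in>W. u \<bullet> w = 0) \<Longrightarrow> 0 \<le> u \<bullet> (M *v u)"
    using gW unfolding good_sub_def by auto
  have dimW: "dim W \<le> CARD('n) - k"
  proof (rule ccontr)
    assume H: "\<not> dim W \<le> CARD('n) - k"
    obtain S :: "'n set" where cS: "card S = k"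
      using obtain_subset_with_card_n[of k "UNIV :: 'n set"] assms(2) by metis
    define E where "E = {x::real^'n. \<forall>i. i \<notin> S \<longrightarrow> x$i = 0}"
    have subE: "subspace E" unfolding E_def subspace_def by auto
    have "vec.dim E = k" using dim_substandard_cart[of S] cS unfolding E_def by simp
    then have dE: "dim E = k" by (simp add: dim_vec_eq)
    have "dim {x + y |x y. x \<in> W \<and> y \<in> E} + dim (W \<inter> E) = dim W + dim E"
      by (rule dim_sums_Int[OF subW subE])
    moreover have "dim {x + y |x y. x \<in> W \<and> y \<in> E} \<le> CARD('n)" by (rule dim_subset_UNIV_cart)
    ultimately have "dim (W \<inter> E) \<noteq> 0" using H dE assms(2) by linarith
    then obtain x where xW: "x \<in> W" and xE: "x \<in> E" and x0: "x \<noteq> 0"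
      by (metis dim_eq_0 IntD1 IntD2 subsetI singletonI insertI1 subset_singletonD Int_iff singletonD)
    have "x \<bullet> (M *v x) < 0" using negW xW x0 by blast
    moreover have "0 \<le> (\<Sum>i\<in>S. \<Sum>j\<in>S. x$i * M$i$j * x$j)"
      using kpsd[OF cS] unfolding principal_submatrix_psd_def by blast
    moreover have "(\<Sum>i\<in>S. \<Sum>j\<in>S. x$i * M$i$j * x$j) = x \<bullet> (M *v x)"
    proof -
      have xz: "x$i = 0" if "i \<notin> S" for i using xE that by (simp add: E_def)
      have "(\<Sum>i\<in>S. \<Sum>j\<in>S. x$i * M$i$j * x$j) = (\<Sum>i\<in>S. \<Sum>j\<in>UNIV. x$i * M$i$j * x$j)"
        by (intro sum.cong refl sum.mono_neutral_left) (auto simp: xz)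
      also have "\<dots> = (\<Sum>i\<in>UNIV. \<Sum>j\<in>UNIV. x$i * M$i$j * x$j)"
        by (intro sum.mono_neutral_left) (auto simp: xz)
      finally show ?thesis by (simp add: qf_sum)
    qed
    ultimately show False by linarith
  qed
  obtain B where BW: "B \<subseteq> W" and po: "pairwise orthogonal B" and nb: "\<And>b. b \<in> B \<Longrightarrow> norm b = 1"
    and indB: "independent B" and cB: "card B = dim W" and spB: "span B = W"
    using orthonormal_basis_subspace[OF subW] by metis
  have finB: "finite B" using indB by (metis independent_imp_finite)
  have vv: "b \<bullet> b = 1" if "b \<in> B" for b using nb[OF that] by (metis norm_eq_1)
  have bc: "b \<bullet> c = 0" if "b \<in> B" "c \<in> B" "b \<noteq> c" for b c
    using po that by (auto simp: pairwise_def orthogonal_def)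
  define N where "N = (\<chi> i j. M$i$j + lambda1 * (\<Sum>b\<in>B. b$i*b$j))"
  have qN: "x \<bullet> (N *v x) = x \<bullet> (M *v x) + lambda1 * (\<Sum>b\<in>B. (b \<bullet> x)^2)" for x
  proof -
    have "x \<bullet> (N *v x) = (\<Sum>i\<in>UNIV. \<Sum>j\<in>UNIV. x$i * M$i$j * x$j)
        + lambda1 * (\<Sum>i\<in>UNIV. \<Sum>j\<in>UNIV. x$i * (\<Sum>b\<in>B. b$i*b$j) * x$j)"
      by (simp add: qf_sum N_def algebra_simps sum.distrib sum_distrib_left)
    then show ?thesis by (simp add: qf_sum proj_qf)
  qed
  have Npsd: "0 \<le> x \<bullet> (N *v x)" for x
  proof -
    define w where "w = (\<Sum>b\<in>B. (b \<bullet> x) *\<^sub>R b)"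
    define u where "u = x - w"
    have wW: "w \<in> W" unfolding w_def using BW subW
      by (intro subspace_sum subspace_scale) auto
    have ub: "u \<bullet> c = 0" if "c \<in> B" for c
    proof -
      have "w \<bullet> c = (\<Sum>b\<in>B. (b \<bullet> x) * (b \<bullet> c))" by (simp add: w_def inner_sum_left)
      also have "\<dots> = (\<Sum>b\<in>B. if b = c then c \<bullet> x else 0)"
        by (intro sum.cong refl) (auto simp: bc that vv)
      also have "\<dots> = c \<bullet> x" using finB that by simp
      finally show ?thesis by (simp add: u_def inner_diff_left inner_diff_right inner_commute)
    qed
    have uW: "u \<bullet> y = 0" if "y \<in> W" for y
      using orthogonal_to_span[of y B u] that spB ub unfolding orthogonal_def by blast
    have nw: "(norm w)^2 = (\<Sum>b\<in>B. (b \<bullet> x)^2)"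
    proof -
      have "(norm w)^2 = w \<bullet> w" by (simp add: power2_norm_eq_inner)
      also have "\<dots> = (\<Sum>b\<in>B. (b \<bullet> x) * (b \<bullet> w))" by (simp add: w_def inner_sum_left)
      also have "\<dots> = (\<Sum>b\<in>B. (b \<bullet> x)^2)"
      proof (intro sum.cong refl)
        fix c assume cB: "c \<in> B"
        have "c \<bullet> w = c \<bullet> x" using ub[OF cB] by (simp add: u_def inner_diff_left inner_diff_right inner_commute)
        then show "(c \<bullet> x) * (c \<bullet> w) = (c \<bullet> x)^2" by (simp add: power2_eq_square)
      qed
      finally show ?thesis .
    qed
    have cross: "u \<bullet> (M *v w) = 0" using uW invW[OF wW] by blast
    have cross2: "w \<bullet> (M *v u) = 0" using sym_dot[OF sym, of w u] cross by (simp add: inner_commute)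
    have "x \<bullet> (M *v x) = w \<bullet> (M *v w) + u \<bullet> (M *v u)"
    proof -
      have "x = w + u" by (simp add: u_def)
      then have "x \<bullet> (M *v x) = (w + u) \<bullet> (M *v (w + u))" by simp
      also have "\<dots> = w \<bullet> (M *v w) + u \<bullet> (M *v u) + u \<bullet> (M *v w) + w \<bullet> (M *v u)"
        by (simp add: matrix_vector_right_distrib inner_add_left inner_add_right)
      finally show ?thesis using cross cross2 by simp
    qed
    moreover have "0 \<le> u \<bullet> (M *v u)" using perpW uW by blast
    moreover have "- lambda1 * (norm w)^2 \<le> w \<bullet> (M *v w)" by (rule lower)
    ultimately show ?thesis using qN[of x] nw by simp
  qed
  have symN: "symmetric_mat N" using sym unfolding symmetric_mat_def N_def
    by (auto simp: transpose_def vec_eq_iff mult.commute)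
  have NP: "N \<in> psd_cone" unfolding psd_cone_def using symN Npsd by blast
  have "frobenius_norm (M - N) = sqrt (lambda1^2 * real (card B))"
  proof -
    have "(\<Sum>i\<in>UNIV. \<Sum>j\<in>UNIV. ((M - N)$i$j)^2)
        = (\<Sum>i\<in>UNIV. \<Sum>j\<in>UNIV. lambda1^2 * (\<Sum>b\<in>B. b$i*b$j)^2)"
      by (simp add: N_def power_mult_distrib)
    also have "\<dots> = lambda1^2 * real (card B)"
      by (simp add: sum_distrib_left[symmetric] frob_B[OF finB po nb])
    finally show ?thesis unfolding frobenius_norm_def by simp
  qed
  also have "\<dots> = lambda1 * sqrt (real (card B))" using l0 by (simp add: real_sqrt_mult)
  also have "\<dots> \<le> lambda1 * sqrt (real (CARD('n) - k))"
    using dimW cB l0 by (intro mult_left_mono) auto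
  finally have F: "frobenius_norm (M - N) \<le> sqrt (real (CARD('n) - k)) * lambda1" by (simp add: mult.commute)
  have "distF_psd M \<le> frobenius_norm (M - N)" unfolding distF_psd_def
  proof (rule cINF_lower[OF _ NP])
    show "bdd_below ((\<lambda>N. frobenius_norm (M - N)) ` psd_cone)"
      by (rule bdd_belowI[of _ 0]) (auto simp: frobenius_norm_def intro!: sum_nonneg)
  qed
  with F show ?thesis by linarith
qed

end
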